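(* Let $G=(V,E,w)$ be a graph with $V\neq\emptyset$, positive vertex weights and maximum degree $\Delta\ge1$. Let $1\le\alpha\le\Delta$ and $\gamma=\lceil\sqrt{2\Delta\alpha}\,\rceil$, and suppose $G$ is a $\gamma$-stable instance of \texttt{MIS} with maximum weight independent set $I^*$. If $I'$ is an independent set of $G$ with $w(I')\ge w(I^* )/\alpha$, then $I^*\cap I'\neq\emptyset$.
   Context: \texttt{MIS}: given a graph $G=(V,E)$ with weights $w:V\to\mathbb{R}_{>0}$, find an independent set maximizing $w(I)=\sum_{u\in I}w_u$; $w(X)=\sum_{u\in X}w_u$. For $\gamma\ge1$, a $\gamma$-perturbation of $w$ is any $w'$ with $w_u\le w'_u\le\gamma w_u$ for all $u$. The instance is $\gamma$-stable if it has a unique maximum weight independent set $I^*$ and $I^*$ remains the unique maximum weight independent set under every $\gamma$-perturbation of $w$. *)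

theory Defs
  imports Complex_Main
begin

definition simple_graph :: "'a set \<Rightarrow> ('a \<times> 'a) set \<Rightarrow> bool" where
  "simple_graph V E \<longleftrightarrow> finite V \<and> E \<subseteq> V \<times> V \<and>
     (\<forall>u v. (u, v) \<in> E \<longrightarrow> (v, u) \<in> E) \<and> (\<forall>v. (v, v) \<notin> E)"

definition degree :: "('a \<times> 'a) set \<Rightarrow> 'a \<Rightarrow> nat" where
  "degree E v = card {u. (v, u) \<in> E}"

definition max_degree :: "'a set \<Rightarrow> ('a \<times> 'a) set \<Rightarrow> nat" where
  "max_degree V E = Max (degree E ` V)"

definition independent_set :: "'a set \<Rightarrow> ('a \<times> 'a) set \<Rightarrow> 'a set \<Rightarrow> bool" where
  "independent_set V E I \<longleftrightarrow> I \<subseteq> V \<and> (\<forall>u\<in>I. \<forall>v\<in>I. (u, v) \<notin> E)"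

definition wt :: "('a \<Rightarrow> real) \<Rightarrow> 'a set \<Rightarrow> real" where
  "wt w X = (\<Sum>u\<in>X. w u)"

definition max_weight_is :: "'a set \<Rightarrow> ('a \<times> 'a) set \<Rightarrow> ('a \<Rightarrow> real) \<Rightarrow> 'a set \<Rightarrow> bool" where
  "max_weight_is V E w I \<longleftrightarrow> independent_set V E I \<and>
     (\<forall>J. independent_set V E J \<longrightarrow> wt w J \<le> wt w I)"

definition unique_max_weight_is :: "'a set \<Rightarrow> ('a \<times> 'a) set \<Rightarrow> ('a \<Rightarrow> real) \<Rightarrow> 'a set \<Rightarrow> bool" where
  "unique_max_weight_is V E w I \<longleftrightarrow> max_weight_is V E w I \<and>
     (\<forall>J. max_weight_is V E w J \<longrightarrow> J = I)"

definition perturbation :: "'a set \<Rightarrow> real \<Rightarrow> ('a \<Rightarrow> real) \<Rightarrow> ('a \<Rightarrow> real) \<Rightarrow> bool" where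
  "perturbation V \<gamma> w w' \<longleftrightarrow> (\<forall>u\<in>V. w u \<le> w' u \<and> w' u \<le> \<gamma> * w u)"

definition stable_MIS :: "'a set \<Rightarrow> ('a \<times> 'a) set \<Rightarrow> ('a \<Rightarrow> real) \<Rightarrow> real \<Rightarrow> 'a set \<Rightarrow> bool" where
  "stable_MIS V E w \<gamma> I \<longleftrightarrow> unique_max_weight_is V E w I \<and>
     (\<forall>w'. perturbation V \<gamma> w w' \<longrightarrow> unique_max_weight_is V E w' I)"

end

theory Submission
  imports Defs
begin

theorem mainTheorem6:
  fixes V :: "'a set" and E :: "('a \<times> 'a) set" and w :: "'a \<Rightarrow> real"
    and \<alpha> :: real and Istar I' :: "'a set"
  assumes "simple_graph V E" and "V \<noteq> {}"
    and "\<forall>u\<in>V. w u > 0"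
    and "max_degree V E \<ge> 1"
    and "1 \<le> \<alpha>" and "\<alpha> \<le> real (max_degree V E)"
    and "stable_MIS V E w (of_int \<lceil>sqrt (2 * real (max_degree V E) * \<alpha>)\<rceil>) Istar"
    and "independent_set V E I'"
    and "wt w I' \<ge> wt w Istar / \<alpha>"
  shows "Istar \<inter> I' \<noteq> {}"
proof
  assume disj: "Istar \<inter> I' = {}"
  define D where "D = real (max_degree V E)"
  define g :: real where "g = of_int \<lceil>sqrt (2 * D * \<alpha>)\<rceil>"
  have "\<alpha> * \<alpha> \<le> 2 * D * \<alpha>" using assms(5,6) unfolding D_def
    by (smt (verit) mult_right_mono)
  hence "sqrt (\<alpha> * \<alpha>) \<le> sqrt (2 * D * \<alpha>)" by (rule real_sqrt_le_mono)
  moreover have "sqrt (\<alpha> * \<alpha>) = \<alpha>" using assms(5) by simp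
  ultimately have a1: "\<alpha> \<le> sqrt (2 * D * \<alpha>)" by simp
  have "sqrt (2 * D * \<alpha>) \<le> g" unfolding g_def by (rule le_of_int_ceiling)
  with a1 have ga: "\<alpha> \<le> g" by linarith
  have st: "stable_MIS V E w g Istar" using assms(7) unfolding g_def D_def .
  have Imax: "max_weight_is V E w Istar"
    using st unfolding stable_MIS_def unique_max_weight_is_def by blast
  have IV: "I' \<subseteq> V" using assms(8) unfolding independent_set_def by blast
  have ne: "I' \<noteq> Istar"
  proof
    assume "I' = Istar"
    hence e: "Istar = {}" using disj by blast
    obtain v where v: "v \<in> V" using assms(2) by blast
    have "(v, v) \<notin> E" using assms(1) unfolding simple_graph_def by blast
    hence "independent_set V E {v}" using v
      unfolding independent_set_def by blast
    hence "wt w {v} \<le> wt w Istar" using Imax unfolding max_weight_is_def by blast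
    moreover have "w v > 0" using v assms(3) by blast
    ultimately show False using e unfolding wt_def by simp
  qed
  define w' where "w' = (\<lambda>u. if u \<in> I' then g * w u else w u)"
  have "perturbation V g w w'"
    unfolding perturbation_def
  proof
    fix u assume "u \<in> V"
    hence wu: "w u > 0" using assms(3) by blast
    have g1: "1 \<le> g" using assms(5) ga by linarith
    have "1 * w u \<le> g * w u" using g1 wu by (intro mult_right_mono) auto
    thus "w u \<le> w' u \<and> w' u \<le> g * w u" unfolding w'_def by simp
  qed
  hence U: "unique_max_weight_is V E w' Istar" using st unfolding stable_MIS_def by blast
  hence notmax: "\<not> max_weight_is V E w' I'" using ne unfolding unique_max_weight_is_def by blast
  then obtain J where "independent_set V E J" "wt w' J > wt w' I'"
    using assms(8) unfolding max_weight_is_def by auto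
  moreover have "wt w' J \<le> wt w' Istar"
    using U calculation(1) unfolding unique_max_weight_is_def max_weight_is_def by blast
  ultimately have lt: "wt w' I' < wt w' Istar" by linarith
  have "wt w' I' = (\<Sum>u\<in>I'. g * w u)" unfolding wt_def w'_def by (intro sum.cong) auto
  hence e1: "wt w' I' = g * wt w I'" unfolding wt_def by (simp add: sum_distrib_left)
  have e2: "wt w' Istar = wt w Istar" unfolding wt_def w'_def
    using disj by (intro sum.cong) auto
  have pos: "wt w I' \<ge> 0" unfolding wt_def using IV assms(3)
    by (intro sum_nonneg) (meson less_imp_le subsetD)
  have "wt w Istar \<le> \<alpha> * wt w I'" using assms(9) assms(5)
    by (simp add: divide_le_eq mult.commute)
  moreover have "\<alpha> * wt w I' \<le> g * wt w I'" using ga pos by (rule mult_right_mono)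
  ultimately show False using lt e1 e2 by linarith
qed

end
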